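(* Let $p$ be a prime and $n,K$ positive integers. (1) If $p^K\equiv1\pmod n$, then $P(p,n)$ divides $p^K-1$. (2) If $p^K\equiv-1\pmod n$, then $P(p,n)$ divides $n(p^K-1)$.
   Context: For positive integers $m,n$, let $\mathbf{Z}_m$ be the integers modulo $m$ and $T:\mathbf{Z}_m^n\to\mathbf{Z}_m^n$, $T(a_0,\dots,a_{n-1})=(a_0+a_1,a_1+a_2,\dots,a_{n-1}+a_0)$. For $\mathbf{a}\in\mathbf{Z}_m^n$ the cycle length of $(T^k\mathbf{a})_{k\ge0}$ is the smallest positive integer $P$ such that there is $N$ with $T^{k+P}\mathbf{a}=T^k\mathbf{a}$ for all $k\ge N$. $P(m,n)$ denotes the maximum of these cycle lengths over all $\mathbf{a}\in\mathbf{Z}_m^n$. *)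

theory Defs
  imports "HOL-Number_Theory.Number_Theory"
begin

text \<open>Elements of Z_m^n are represented as functions a :: nat => nat with
  a i < m for i < n (the residue representatives 0..m-1) and a i = 0 for i >= n.\<close>

definition vecs :: "nat \<Rightarrow> nat \<Rightarrow> (nat \<Rightarrow> nat) set" where
  "vecs m n = {a. (\<forall>i<n. a i < m) \<and> (\<forall>i\<ge>n. a i = 0)}"

definition Tmap :: "nat \<Rightarrow> nat \<Rightarrow> (nat \<Rightarrow> nat) \<Rightarrow> (nat \<Rightarrow> nat)" where
  "Tmap m n a = (\<lambda>i. if i < n then (a i + a ((i + 1) mod n)) mod m else 0)"

definition cycle_length :: "nat \<Rightarrow> nat \<Rightarrow> (nat \<Rightarrow> nat) \<Rightarrow> nat" where
  "cycle_length m n a = (LEAST P. 0 < P \<and>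
     (\<exists>N. \<forall>k\<ge>N. (Tmap m n ^^ (k + P)) a = (Tmap m n ^^ k) a))"

definition Pmax :: "nat \<Rightarrow> nat \<Rightarrow> nat" where
  "Pmax m n = Max (cycle_length m n ` vecs m n)"

end

theory Submission imports Defs begin

lemma pascal_sum:
  fixes g :: "nat \<Rightarrow> nat"
  shows "(\<Sum>l\<le>Suc j. (Suc j choose l) * g l) = (\<Sum>l\<le>j. (j choose l) * g l) + (\<Sum>l\<le>j. (j choose l) * g (Suc l))"
proof -
  have "(\<Sum>l\<le>Suc j. (Suc j choose l) * g l) = g 0 + (\<Sum>l\<le>j. (Suc j choose Suc l) * g (Suc l))"
    by (subst sum.atMost_Suc_shift) simp
  also have "\<dots> = g 0 + (\<Sum>l\<le>j. (j choose Suc l) * g (Suc l)) + (\<Sum>l\<le>j. (j choose l) * g (Suc l))"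
    by (simp add: sum.distrib algebra_simps)
  also have "g 0 + (\<Sum>l\<le>j. (j choose Suc l) * g (Suc l)) = (\<Sum>l\<le>Suc j. (j choose l) * g l)"
    by (subst sum.atMost_Suc_shift) simp
  also have "\<dots> = (\<Sum>l\<le>j. (j choose l) * g l)" by simp
  finally show ?thesis .
qed

lemma tpow:
  assumes "a \<in> vecs m n" "i < n"
  shows "(Tmap m n ^^ j) a i = (\<Sum>l\<le>j. (j choose l) * a ((i+l) mod n)) mod m"
  using assms(2)
proof (induction j arbitrary: i)
  case 0
  then show ?case using assms(1) by (simp add: vecs_def)
next
  case (Suc j)
  have n: "0 < n" using Suc.prems by simp
  have i1: "(i+1) mod n < n" using n by simp
  have e: "(\<Sum>l\<le>j. (j choose l) * a (((i+1) mod n + l) mod n)) = (\<Sum>l\<le>j. (j choose l) * a ((i + Suc l) mod n))"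
    by (intro sum.cong refl) (simp add: mod_add_left_eq)
  have "(Tmap m n ^^ Suc j) a i = ((Tmap m n ^^ j) a i + (Tmap m n ^^ j) a ((i+1) mod n)) mod m"
    using Suc.prems by (simp add: Tmap_def)
  also have "\<dots> = ((\<Sum>l\<le>j. (j choose l) * a ((i+l) mod n)) + (\<Sum>l\<le>j. (j choose l) * a ((i + Suc l) mod n))) mod m"
    using Suc.IH[OF Suc.prems] Suc.IH[OF i1] e by (simp add: mod_add_eq)
  also have "\<dots> = (\<Sum>l\<le>Suc j. (Suc j choose l) * a ((i+l) mod n)) mod m"
    using pascal_sum[of j "\<lambda>l. a ((i+l) mod n)"] by simp
  finally show ?case .
qed

lemma prime_pow_dvd_choose:
  assumes "prime (p::nat)" "0 < l" "l < p ^ K"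
  shows "p dvd (p ^ K choose l)"
proof (rule ccontr)
  assume nd: "\<not> p dvd (p ^ K choose l)"
  have "l * (p ^ K choose l) = p ^ K * ((p ^ K - 1) choose (l - 1))"
    using times_binomial_minus1_eq[of l "p^K"] assms by simp
  hence "p ^ K dvd l * (p ^ K choose l)" by simp
  moreover have "coprime (p ^ K) (p ^ K choose l)"
    using nd assms(1) by (simp add: prime_imp_coprime)
  ultimately have "p ^ K dvd l" using coprime_dvd_mult_left_iff by blast
  hence "p ^ K \<le> l" using assms(2) by (simp add: dvd_imp_le)
  thus False using assms(3) by simp
qed

lemma Tq:
  assumes "prime p" "a \<in> vecs p n" "i < n"
  shows "(Tmap p n ^^ (p^K)) a i = (a i + a ((i + p^K) mod n)) mod p"
proof -
  let ?q = "p^K"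
  let ?f = "\<lambda>l. (?q choose l) * a ((i+l) mod n)"
  have q0: "0 < ?q" using assms(1) prime_gt_0_nat by simp
  have s: "{..?q} = insert 0 (insert ?q {1..<?q})" using q0 by auto
  have "sum ?f {..?q} = ?f 0 + (?f ?q + sum ?f {1..<?q})"
    unfolding s using q0 by (simp add: sum.insert)
  moreover have "p dvd sum ?f {1..<?q}"
    by (intro dvd_sum) (use prime_pow_dvd_choose[OF assms(1)] in auto)
  ultimately have "sum ?f {..?q} mod p = (?f 0 + ?f ?q) mod p"
    by (auto elim!: dvdE simp: algebra_simps)
  moreover have "?f 0 = a i" using assms(3) by simp
  ultimately show ?thesis using tpow[OF assms(2,3)] by simp
qed

definition Rot :: "nat \<Rightarrow> (nat \<Rightarrow> nat) \<Rightarrow> (nat \<Rightarrow> nat)" where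
  "Rot n c = (\<lambda>i. if i < n then c ((i + (n-1)) mod n) else 0)"

lemma TRot: "Tmap m n (Rot n c) = Rot n (Tmap m n c)"
proof
  fix i
  show "Tmap m n (Rot n c) i = Rot n (Tmap m n c) i"
  proof (cases "i < n")
    case True
    then have n: "0 < n" by simp
    have e1: "((i+1) mod n + (n-1)) mod n = i"
    proof -
      have "((i+1) mod n + (n-1)) mod n = (i+1+(n-1)) mod n" by (rule mod_add_left_eq)
      also have "i+1+(n-1) = i + n" using n by simp
      finally show ?thesis using True by simp
    qed
    have e2: "((i+(n-1)) mod n + 1) mod n = i"
    proof -
      have "((i+(n-1)) mod n + 1) mod n = (i+(n-1)+1) mod n" by (rule mod_add_left_eq)
      also have "i+(n-1)+1 = i + n" using n by simp
      finally show ?thesis using True by simp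
    qed
    show ?thesis using True n e1 e2 by (simp add: Tmap_def Rot_def)
  qed (simp add: Tmap_def Rot_def)
qed

lemma TRot_pow: "(Tmap m n ^^ k) ((Rot n ^^ j) c) = (Rot n ^^ j) ((Tmap m n ^^ k) c)"
proof -
  have 1: "Tmap m n ((Rot n ^^ j) c) = (Rot n ^^ j) (Tmap m n c)" for c
    by (induction j) (simp_all add: TRot)
  show ?thesis
    by (induction k) (simp_all add: 1)
qed

lemma Rot_pow: "i < n \<Longrightarrow> (Rot n ^^ j) c i = c ((i + j*(n-1)) mod n)"
proof (induction j arbitrary: i)
  case 0 then show ?case by simp
next
  case (Suc j)
  have "(Rot n ^^ Suc j) c i = Rot n ((Rot n ^^ j) c) i" by simp
  also have "\<dots> = (Rot n ^^ j) c ((i + (n-1)) mod n)"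
    using Suc.prems unfolding Rot_def by simp
  also have "\<dots> = c (((i + (n-1)) mod n + j*(n-1)) mod n)"
    using Suc.prems by (intro Suc.IH) simp
  also have "\<dots> = c ((i + Suc j*(n-1)) mod n)"
    by (simp add: mod_add_left_eq add.assoc)
  finally show ?case .
qed

lemma Rot_n:
  assumes "0 < n" "\<forall>i\<ge>n. c i = 0"
  shows "(Rot n ^^ n) c = c"
proof
  fix i
  show "(Rot n ^^ n) c i = c i"
  proof (cases "i < n")
    case True
    have "(i + n*(n-1)) mod n = i" using True by simp
    then show ?thesis using Rot_pow[OF True] by simp
  next
    case False
    obtain n' where "n = Suc n'" using assms(1) by (cases n) auto
    then show ?thesis using False assms(2) by (simp add: Rot_def)
  qed
qed

lemma cycle_dvd:
  assumes L: "0 < L" and per: "\<forall>k\<ge>1. (f ^^ (k + L)) x = (f ^^ k) x"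
  shows "(LEAST P. 0 < P \<and> (\<exists>N. \<forall>k\<ge>N. (f ^^ (k + P)) x = (f ^^ k) x)) dvd L"
proof -
  let ?Q = "\<lambda>P. 0 < P \<and> (\<exists>N. \<forall>k\<ge>N. (f ^^ (k + P)) x = (f ^^ k) x)"
  define P0 where "P0 = (LEAST P. ?Q P)"
  have QL: "?Q L" using L per by blast
  have Q0: "?Q P0" unfolding P0_def by (rule LeastI[of ?Q L, OF QL])
  then obtain N1 where N1: "\<forall>k\<ge>N1. (f ^^ (k + P0)) x = (f ^^ k) x" by blast
  have mult: "\<forall>k\<ge>N1. (f ^^ (k + t*P0)) x = (f ^^ k) x" for t
  proof (induction t)
    case 0 then show ?case by simp
  next
    case (Suc t)
    show ?case
    proof (intro allI impI)
      fix k assume k: "N1 \<le> k"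
      have "(f ^^ (k + Suc t*P0)) x = (f ^^ ((k + t*P0) + P0)) x" by (simp add: algebra_simps)
      also have "\<dots> = (f ^^ (k + t*P0)) x" using N1 k by simp
      also have "\<dots> = (f ^^ k) x" using Suc k by simp
      finally show "(f ^^ (k + Suc t*P0)) x = (f ^^ k) x" .
    qed
  qed
  define r where "r = L mod P0"
  have rl: "r < P0" using Q0 unfolding r_def by simp
  show ?thesis
  proof (rule ccontr)
    assume nd: "\<not> ?thesis"
    have "\<not> P0 dvd L" using nd by (simp add: P0_def)
    then have r0: "0 < r" unfolding r_def using gr0I dvd_eq_mod_eq_0 by metis
    have "\<forall>k\<ge>max N1 1. (f ^^ (k + r)) x = (f ^^ k) x"
    proof (intro allI impI)
      fix k assume k: "max N1 1 \<le> k"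
      have Ld: "L = r + (L div P0) * P0" unfolding r_def by simp
      have "(f ^^ (k + r)) x = (f ^^ ((k + r) + (L div P0) * P0)) x"
        using mult k by simp
      also have "(k + r) + (L div P0) * P0 = k + L" using Ld by simp
      also have "(f ^^ (k + L)) x = (f ^^ k) x" using per k by simp
      finally show "(f ^^ (k + r)) x = (f ^^ k) x" .
    qed
    then have "?Q r" using r0 by blast
    then have "P0 \<le> r" unfolding P0_def by (rule Least_le)
    then show False using rl by simp
  qed
qed

lemma T_vanish: "i \<ge> n \<Longrightarrow> Tmap m n c i = 0"
  by (simp add: Tmap_def)

lemma Tpow_Suc_vanish: "i \<ge> n \<Longrightarrow> (Tmap m n ^^ Suc k) c i = 0"
  by (simp add: Tmap_def)

lemma Pmax_dvd:
  assumes "0 < p" "0 < L"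
    and per: "\<And>a k. a \<in> vecs p n \<Longrightarrow> 1 \<le> k \<Longrightarrow> (Tmap p n ^^ (k + L)) a = (Tmap p n ^^ k) a"
  shows "Pmax p n dvd L"
proof -
  have fin: "finite (vecs p n)"
  proof -
    have "vecs p n = {f. \<forall>x. (x \<in> {..<n} \<longrightarrow> f x \<in> {..<p}) \<and> (x \<notin> {..<n} \<longrightarrow> f x = 0)}"
      by (auto simp: vecs_def)
    moreover have "finite {f. \<forall>x. (x \<in> {..<n} \<longrightarrow> f x \<in> {..<p}) \<and> (x \<notin> {..<n} \<longrightarrow> f x = (0::nat))}"
      by (rule finite_set_of_finite_funs) auto
    ultimately show ?thesis by simp
  qed
  have ne: "(\<lambda>_. 0) \<in> vecs p n" using assms(1) by (simp add: vecs_def)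
  have "Pmax p n \<in> cycle_length p n ` vecs p n"
    unfolding Pmax_def using fin ne by (intro Max_in) auto
  then obtain a where a: "a \<in> vecs p n" "Pmax p n = cycle_length p n a" by blast
  show ?thesis unfolding a(2) cycle_length_def
    by (rule cycle_dvd[OF assms(2)]) (use per[OF a(1)] in auto)
qed

theorem proposition2p5:
  fixes p n K :: nat
  assumes "prime p" and "0 < n" and "0 < K"
  shows "([p ^ K = 1] (mod n) \<longrightarrow> Pmax p n dvd p ^ K - 1)
       \<and> ([int p ^ K = - 1] (mod int n) \<longrightarrow> Pmax p n dvd n * (p ^ K - 1))"
proof -
  define q where "q = p ^ K"
  have p2: "2 \<le> p" using assms(1) prime_ge_2_nat by blast
  have "p \<le> p ^ K" using p2 assms(3) by (intro self_le_power) auto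
  then have q2: "2 \<le> q" unfolding q_def using p2 by linarith
  have p0: "0 < p" using p2 by simp
  let ?T = "Tmap p n"
  have Tq': "(?T ^^ q) a = Rot n (?T a)" if a: "a \<in> vecs p n" and c: "n dvd q + 1" for a
  proof
    fix i
    show "(?T ^^ q) a i = Rot n (?T a) i"
    proof (cases "i < n")
      case True
      obtain t where t: "q + 1 = n * t" using c by blast
      have t1: "1 \<le> t" using t by (cases t) auto
      have e0: "i + q = (i + (n-1)) + n * (t - 1)"
        using t t1 assms(2) by (simp add: algebra_simps diff_mult_distrib2)
      have e: "(i + q) mod n = (i + (n-1)) mod n" by (simp only: e0 mod_mult_self2)
      have im: "(i + (n-1)) mod n < n" using assms(2) by simp
      have e2: "((i + (n-1)) mod n + 1) mod n = i"
      proof -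
        have "((i+(n-1)) mod n + 1) mod n = (i+(n-1)+1) mod n" by (rule mod_add_left_eq)
        also have "i+(n-1)+1 = i + n" using assms(2) by simp
        finally show ?thesis using True by simp
      qed
      show ?thesis using Tq[OF assms(1) a True, of K] True im e e2
        unfolding q_def[symmetric] by (simp add: Rot_def Tmap_def add.commute)
    next
      case False
      obtain q' where "q = Suc q'" using q2 by (cases q) auto
      then show ?thesis using False by (simp add: Rot_def Tmap_def)
    qed
  qed
  have part1: "Pmax p n dvd q - 1" if c: "[q = 1] (mod n)"
  proof (rule Pmax_dvd[OF p0])
    show "0 < q - 1" using q2 by simp
    fix a and k :: nat assume a: "a \<in> vecs p n" and k: "1 \<le> k"
    have TqT: "(?T ^^ q) a = ?T a"
    proof
      fix i
      show "(?T ^^ q) a i = ?T a i"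
      proof (cases "i < n")
        case True
        have "(i + q) mod n = (i + 1) mod n" using c unfolding cong_def by (simp add: mod_add_right_eq[symmetric, of i q])
        then show ?thesis using Tq[OF assms(1) a True, of K] True unfolding q_def[symmetric]
          by (simp add: Tmap_def)
      next
        case False
        obtain q' where "q = Suc q'" using q2 by (cases q) auto
        then show ?thesis using False by (simp add: Tmap_def)
      qed
    qed
    obtain k' where k': "k = Suc k'" using k by (cases k) auto
    have "(?T ^^ (k + (q - 1))) a = (?T ^^ (k' + q)) a" using k' q2 by simp
    also have "\<dots> = (?T ^^ k') ((?T ^^ q) a)" by (simp add: funpow_add)
    also have "\<dots> = (?T ^^ k) a" using TqT k' by (simp add: funpow_Suc_right del: funpow.simps)
    finally show "(?T ^^ (k + (q - 1))) a = (?T ^^ k) a" .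
  qed
  have part2: "Pmax p n dvd n * (q - 1)" if c: "n dvd q + 1"
  proof (rule Pmax_dvd[OF p0])
    show "0 < n * (q - 1)" using q2 assms(2) by simp
    fix a and k :: nat assume a: "a \<in> vecs p n" and k: "1 \<le> k"
    have it: "(?T ^^ (1 + j * (q - 1))) a = (Rot n ^^ j) (?T a)" for j
    proof (induction j)
      case 0 then show ?case by simp
    next
      case (Suc j)
      have ee: "1 + Suc j * (q - 1) = (q - 1) + (1 + j * (q - 1))" by simp
      have "(?T ^^ (1 + Suc j * (q - 1))) a = (?T ^^ (q - 1)) ((?T ^^ (1 + j * (q - 1))) a)"
        by (simp only: ee funpow_add comp_apply)
      also have "\<dots> = (Rot n ^^ j) ((?T ^^ (q - 1)) (?T a))" using Suc by (simp add: TRot_pow)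
      also have "(?T ^^ (q - 1)) (?T a) = (?T ^^ q) a"
      proof -
        have "q = Suc (q - 1)" using q2 by simp
        then have "(?T ^^ q) a = (?T ^^ Suc (q - 1)) a" by simp
        also have "\<dots> = (?T ^^ (q - 1)) (?T a)" by (simp only: funpow_Suc_right comp_apply)
        finally show ?thesis by simp
      qed
      also have "\<dots> = Rot n (?T a)" using Tq'[OF a c] .
      finally show ?case by (simp add: funpow_Suc_right del: funpow.simps)
    qed
    have van: "\<forall>i\<ge>n. ?T a i = 0" by (simp add: Tmap_def)
    obtain k' where k': "k = Suc k'" using k by (cases k) auto
    have ee: "k + n * (q - 1) = k' + (1 + n * (q - 1))" using k' by simp
    have "(?T ^^ (k + n * (q - 1))) a = (?T ^^ k') ((?T ^^ (1 + n * (q - 1))) a)"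
      by (simp only: ee funpow_add comp_apply)
    also have "\<dots> = (?T ^^ k') (?T a)" using it[of n] Rot_n[OF assms(2) van] by simp
    also have "\<dots> = (?T ^^ k) a" using k' by (simp add: funpow_Suc_right del: funpow.simps)
    finally show "(?T ^^ (k + n * (q - 1))) a = (?T ^^ k) a" .
  qed
  show ?thesis
  proof (intro conjI impI)
    assume "[p ^ K = 1] (mod n)"
    then show "Pmax p n dvd p ^ K - 1" using part1 unfolding q_def by simp
  next
    assume h: "[int p ^ K = - 1] (mod int n)"
    have "int n dvd int q + 1"
      using h unfolding q_def by (simp add: cong_iff_dvd_diff)
    then have "int n dvd int (q + 1)" by (simp add: add.commute)
    then have "n dvd q + 1" by (simp only: of_nat_dvd_iff)
    then show "Pmax p n dvd n * (p ^ K - 1)" using part2 unfolding q_def by simp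
  qed
qed

end
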